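(* For every subdistribution $\mu$ on $\Sigma$, state assertions $A_1,\ldots,A_n$ and $p_1,\ldots,p_n\in[0,1]$: $\mu\not\vDash\bigoplus_{i=1}^n(\mathbb{P}[A_i]=p_i)$ iff there exists an outcome assertion $\psi$ containing no implications such that $\mu\vDash\psi$ and $\psi\Rightarrow\lnot\bigoplus_{i=1}^n(\mathbb{P}[A_i]=p_i)$.
   Context: Subdistributions $\mu\colon\Sigma\to[0,1]$ on a countable set of states, mass $|\mu|=\sum_\sigma\mu(\sigma)\le1$, support $\mathsf{supp}(\mu)$, zero $\varnothing$, and partial pointwise sum $+$ (defined when the result has mass $\le1$). State assertions have a relation $\sigma\vDash A$ and are closed under $\land$ and negation. Atomic outcome assertions $\mathbb{P}[A]=p$: $\mu\vDash\mathbb{P}[A]=p$ iff $|\mu|=p$ and every state in $\mathsf{supp}(\mu)$ satisfies $A$. Outcome assertions are built from atomic ones with $\top,\bot,\top^\oplus$ (only $\varnothing$), classical $\land$ and $\Rightarrow$, and $\oplus$ ($\mu\vDash\varphi\oplus\psi$ iff $\mu=\mu_1+\mu_2$ with $\mu_1\vDash\varphi$, $\mu_2\vDash\psi$); $\lnot\varphi=\varphi\Rightarrow\bot$; "no implications" means $\Rightarrow$ does not occur. $\psi\Rightarrow\chi$ as a proposition means every subdistribution satisfying $\psi$ satisfies $\chi$. *)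

theory Defs
  imports "HOL-Analysis.Analysis" "HOL-Library.Countable"
begin

definition mass :: "('s \<Rightarrow> real) \<Rightarrow> real" where
  "mass \<mu> = infsum \<mu> UNIV"

definition supp :: "('s \<Rightarrow> real) \<Rightarrow> 's set" where
  "supp \<mu> = {s. \<mu> s \<noteq> 0}"

definition is_subdist :: "('s::countable \<Rightarrow> real) \<Rightarrow> bool" where
  "is_subdist \<mu> \<longleftrightarrow> (\<forall>s. 0 \<le> \<mu> s) \<and> \<mu> summable_on UNIV \<and> mass \<mu> \<le> 1"

datatype 'sa oassn =
    OAtom 'sa real          (* P[A] = p *)
  | OTop
  | OBot
  | OTopPlus
  | OAnd "'sa oassn" "'sa oassn"
  | OImp "'sa oassn" "'sa oassn"
  | OPlus "'sa oassn" "'sa oassn"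

definition ONot :: "'sa oassn \<Rightarrow> 'sa oassn" where
  "ONot \<phi> = OImp \<phi> OBot"

fun no_imp :: "'sa oassn \<Rightarrow> bool" where
  "no_imp (OImp _ _) = False"
| "no_imp (OAnd a b) = (no_imp a \<and> no_imp b)"
| "no_imp (OPlus a b) = (no_imp a \<and> no_imp b)"
| "no_imp _ = True"

fun osat :: "('s::countable \<Rightarrow> 'sa \<Rightarrow> bool) \<Rightarrow> ('s \<Rightarrow> real) \<Rightarrow> 'sa oassn \<Rightarrow> bool" where
  "osat sat \<mu> (OAtom A p) = (mass \<mu> = p \<and> (\<forall>s\<in>supp \<mu>. sat s A))"
| "osat sat \<mu> OTop = True"
| "osat sat \<mu> OBot = False"
| "osat sat \<mu> OTopPlus = (\<mu> = (\<lambda>_. 0))"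
| "osat sat \<mu> (OAnd a b) = (osat sat \<mu> a \<and> osat sat \<mu> b)"
| "osat sat \<mu> (OImp a b) = (osat sat \<mu> a \<longrightarrow> osat sat \<mu> b)"
| "osat sat \<mu> (OPlus a b) = (\<exists>\<mu>1 \<mu>2. is_subdist \<mu>1 \<and> is_subdist \<mu>2 \<and>
      \<mu> = (\<lambda>s. \<mu>1 s + \<mu>2 s) \<and> osat sat \<mu>1 a \<and> osat sat \<mu>2 b)"

definition oentails :: "('s::countable \<Rightarrow> 'sa \<Rightarrow> bool) \<Rightarrow> 'sa oassn \<Rightarrow> 'sa oassn \<Rightarrow> bool" where
  "oentails sat \<psi> \<phi> \<longleftrightarrow> (\<forall>\<mu>. is_subdist \<mu> \<longrightarrow> osat sat \<mu> \<psi> \<longrightarrow> osat sat \<mu> \<phi>)"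

fun bigplus :: "('sa \<times> real) list \<Rightarrow> 'sa oassn" where
  "bigplus [] = OTopPlus"
| "bigplus [(A, p)] = OAtom A p"
| "bigplus ((A, p) # x # xs) = OPlus (OAtom A p) (bigplus (x # xs))"

end

theory Submission
  imports Defs
begin

definition pat :: "('s \<Rightarrow> 'sa \<Rightarrow> bool) \<Rightarrow> ('sa \<times> real) list \<Rightarrow> 's \<Rightarrow> bool list" where
  "pat sat As s = map (\<lambda>(A,p). sat s A) As"

lemma pat_nth: "i < length As \<Longrightarrow> pat sat As s ! i = sat s (fst (As ! i))"
  by (auto simp: pat_def split: prod.splits)

lemma pat_len: "length (pat sat As s) = length As"
  by (simp add: pat_def)

lemma finite_range_pat: "finite (range (pat sat As))"
proof -
  have "range (pat sat As) \<subseteq> {xs. set xs \<subseteq> (UNIV::bool set) \<and> length xs = length As}"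
    by (auto simp: pat_len)
  moreover have "finite {xs. set xs \<subseteq> (UNIV::bool set) \<and> length xs = length As}"
    by (rule finite_lists_length_eq) simp
  ultimately show ?thesis by (rule finite_subset)
qed

lemma subdist_le:
  assumes "is_subdist g" "\<And>s. 0 \<le> f s" "\<And>s. f s \<le> g s"
  shows "is_subdist f" "mass f \<le> mass g"
proof -
  have sg: "g summable_on UNIV" using assms(1) by (simp add: is_subdist_def)
  have sf: "f summable_on UNIV"
    by (rule summable_on_comparison_test[OF sg]) (use assms in auto)
  show "mass f \<le> mass g" unfolding mass_def
    by (rule infsum_mono[OF sf sg]) (use assms in auto)
  then show "is_subdist f" using assms sf by (auto simp: is_subdist_def)
qed

lemma infsum_fsum:
  fixes f :: "'i \<Rightarrow> 's \<Rightarrow> real"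
  assumes "finite I" "\<And>i. i \<in> I \<Longrightarrow> f i summable_on A"
  shows "infsum (\<lambda>s. \<Sum>i\<in>I. f i s) A = (\<Sum>i\<in>I. infsum (f i) A)
     \<and> (\<lambda>s. \<Sum>i\<in>I. f i s) summable_on A"
  using assms
proof (induction I rule: finite_induct)
  case empty
  then show ?case by simp
next
  case (insert x F)
  then have ih: "infsum (\<lambda>s. \<Sum>i\<in>F. f i s) A = (\<Sum>i\<in>F. infsum (f i) A)"
     "(\<lambda>s. \<Sum>i\<in>F. f i s) summable_on A" by auto
  have sx: "f x summable_on A" using insert by auto
  show ?case using insert(1,2) ih
    by (simp add: infsum_add[OF sx ih(2)] summable_on_add[OF sx ih(2)])
qed

lemma part:
  fixes h :: "'s \<Rightarrow> real" and q :: "'s \<Rightarrow> 'b"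
  assumes "finite (range q)" "h summable_on UNIV"
  shows "infsum h UNIV = (\<Sum>b\<in>range q. infsum h {s. q s = b})"
proof -
  have "(\<Sum>b\<in>range q. infsum h {s. q s = b}) = infsum h (\<Union>b\<in>range q. {s. q s = b})"
    by (rule sum_infsum[OF assms(1)]) (auto intro: summable_on_subset[OF assms(2)])
  moreover have "(\<Union>b\<in>range q. {s. q s = b}) = UNIV" by auto
  ultimately show ?thesis by simp
qed

definition dec :: "('s::countable \<Rightarrow> 'sa \<Rightarrow> bool) \<Rightarrow> ('sa \<times> real) list \<Rightarrow> ('s \<Rightarrow> real) \<Rightarrow> bool" where
  "dec sat As \<nu> = (\<exists>f. (\<forall>i<length As. is_subdist (f i) \<and> mass (f i) = snd (As!i)
      \<and> (\<forall>s\<in>supp (f i). sat s (fst (As!i)))) \<and> \<nu> = (\<lambda>s. \<Sum>i<length As. f i s))"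

lemma L1: "is_subdist \<nu> \<Longrightarrow> osat sat \<nu> (bigplus As) \<longleftrightarrow> dec sat As \<nu>"
proof (induction As arbitrary: \<nu> rule: bigplus.induct)
  case 1
  then show ?case by (simp add: dec_def)
next
  case (2 A p)
  show ?case
  proof
    assume "osat sat \<nu> (bigplus [(A, p)])"
    then show "dec sat [(A, p)] \<nu>" using 2
      by (auto simp: dec_def intro!: exI[of _ "\<lambda>_. \<nu>"])
  next
    assume "dec sat [(A, p)] \<nu>"
    then show "osat sat \<nu> (bigplus [(A, p)])" by (auto simp: dec_def)
  qed
next
  case (3 A p x xs)
  let ?n = "length (x#xs)"
  show ?case
  proof
    assume "osat sat \<nu> (bigplus ((A, p) # x # xs))"
    then obtain \<nu>1 \<nu>2 where h: "is_subdist \<nu>1" "is_subdist \<nu>2" "\<nu> = (\<lambda>s. \<nu>1 s + \<nu>2 s)"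
      "osat sat \<nu>1 (OAtom A p)" "osat sat \<nu>2 (bigplus (x#xs))" by auto
    then have "dec sat (x#xs) \<nu>2" using 3(1) by blast
    then obtain g where g: "\<forall>i<?n. is_subdist (g i) \<and> mass (g i) = snd ((x#xs)!i)
      \<and> (\<forall>s\<in>supp (g i). sat s (fst ((x#xs)!i)))" "\<nu>2 = (\<lambda>s. \<Sum>i<?n. g i s)"
      unfolding dec_def by blast
    let ?f = "\<lambda>i. case i of 0 \<Rightarrow> \<nu>1 | Suc j \<Rightarrow> g j"
    have "\<forall>i<length ((A, p) # x # xs). is_subdist (?f i) \<and> mass (?f i) = snd (((A, p) # x # xs)!i)
      \<and> (\<forall>s\<in>supp (?f i). sat s (fst (((A, p) # x # xs)!i)))"
    proof (intro allI impI)
      fix i assume "i < length ((A, p) # x # xs)"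
      then show "is_subdist (?f i) \<and> mass (?f i) = snd (((A, p) # x # xs)!i)
      \<and> (\<forall>s\<in>supp (?f i). sat s (fst (((A, p) # x # xs)!i)))"
        using h g by (cases i) auto
    qed
    moreover have "\<nu> = (\<lambda>s. \<Sum>i<length ((A, p) # x # xs). ?f i s)"
      using h(3) g(2) by (simp only: length_Cons sum.lessThan_Suc_shift) simp
    ultimately show "dec sat ((A, p) # x # xs) \<nu>" unfolding dec_def by blast
  next
    assume "dec sat ((A, p) # x # xs) \<nu>"
    then obtain f where f: "\<forall>i<Suc ?n. is_subdist (f i) \<and> mass (f i) = snd (((A, p) # x # xs)!i)
      \<and> (\<forall>s\<in>supp (f i). sat s (fst (((A, p) # x # xs)!i)))"
      "\<nu> = (\<lambda>s. \<Sum>i<Suc ?n. f i s)"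
      unfolding dec_def by auto
    define \<nu>2 where "\<nu>2 = (\<lambda>s. \<Sum>i<?n. f (Suc i) s)"
    have nu: "\<nu> = (\<lambda>s. f 0 s + \<nu>2 s)" using f(2) unfolding \<nu>2_def
      by (simp only: sum.lessThan_Suc_shift)
    have nn: "\<And>i s. i < Suc ?n \<Longrightarrow> 0 \<le> f i s" using f(1) by (auto simp: is_subdist_def)
    have "is_subdist \<nu>2"
    proof (rule subdist_le[OF 3(2)])
      fix s show "0 \<le> \<nu>2 s" unfolding \<nu>2_def by (rule sum_nonneg) (use nn in auto)
      show "\<nu>2 s \<le> \<nu> s" unfolding nu using nn[of 0 s] by simp
    qed
    moreover have "dec sat (x#xs) \<nu>2" unfolding dec_def \<nu>2_def
      by (rule exI[of _ "\<lambda>i. f (Suc i)"]) (use f(1) in auto)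
    ultimately have "osat sat \<nu>2 (bigplus (x#xs))" using 3(1) by blast
    moreover have "is_subdist (f 0)" "osat sat (f 0) (OAtom A p)" using f(1) by auto
    ultimately show "osat sat \<nu> (bigplus ((A, p) # x # xs))" using nu \<open>is_subdist \<nu>2\<close> by auto
  qed
qed

lemma L2:
  fixes \<nu> \<mu> :: "'s::countable \<Rightarrow> real"
  assumes nu: "is_subdist \<nu>" and mu: "is_subdist \<mu>" and d: "dec sat As \<nu>"
    and eq: "\<And>b. infsum \<nu> {s. pat sat As s = b} = infsum \<mu> {s. pat sat As s = b}"
  shows "dec sat As \<mu>"
proof -
  let ?n = "length As"
  let ?q = "pat sat As"
  define R where "R b = {s. ?q s = b}" for b
  obtain f where f: "\<forall>i<?n. is_subdist (f i) \<and> mass (f i) = snd (As!i)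
      \<and> (\<forall>s\<in>supp (f i). sat s (fst (As!i)))" "\<nu> = (\<lambda>s. \<Sum>i<?n. f i s)"
    using d unfolding dec_def by blast
  define nR where "nR b = infsum \<nu> (R b)" for b
  define fR where "fR i b = infsum (f i) (R b)" for i b
  define g where "g i s = (if nR (?q s) = 0 then 0 else \<mu> s * fR i (?q s) / nR (?q s))" for i s
  have fnn: "\<And>i s. i < ?n \<Longrightarrow> 0 \<le> f i s" using f(1) by (auto simp: is_subdist_def)
  have fsum: "\<And>i A. i < ?n \<Longrightarrow> f i summable_on A"
    using f(1) by (auto simp: is_subdist_def intro: summable_on_subset)
  have nusum: "\<And>A. \<nu> summable_on A" using nu by (auto simp: is_subdist_def intro: summable_on_subset)
  have musum: "\<And>A. \<mu> summable_on A" using mu by (auto simp: is_subdist_def intro: summable_on_subset)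
  have nunn: "\<And>s. 0 \<le> \<nu> s" and munn: "\<And>s. 0 \<le> \<mu> s" using nu mu by (auto simp: is_subdist_def)
  have fle: "\<And>i s. i < ?n \<Longrightarrow> f i s \<le> \<nu> s"
  proof -
    fix i s assume i: "i < ?n"
    have "f i s \<le> (\<Sum>j<?n. f j s)" by (rule member_le_sum) (use i fnn in auto)
    then show "f i s \<le> \<nu> s" using f(2) by simp
  qed
  have fRle: "\<And>i b. i < ?n \<Longrightarrow> fR i b \<le> nR b"
    unfolding fR_def nR_def by (rule infsum_mono) (use fsum nusum fle in auto)
  have fRnn: "\<And>i b. i < ?n \<Longrightarrow> 0 \<le> fR i b"
    unfolding fR_def by (rule infsum_nonneg) (use fnn in auto)
  have nRnn: "\<And>b. 0 \<le> nR b" unfolding nR_def by (rule infsum_nonneg) (use nunn in auto)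
  have fRsum: "\<And>b. (\<Sum>i<?n. fR i b) = nR b"
    unfolding fR_def nR_def f(2) using infsum_fsum[of "{..<?n}" f] fsum by auto
  have mu0: "\<And>s. nR (?q s) = 0 \<Longrightarrow> \<mu> s = 0"
  proof -
    fix s assume "nR (?q s) = 0"
    then have "infsum \<mu> (R (?q s)) \<le> 0" using eq unfolding nR_def R_def by simp
    then show "\<mu> s = 0"
      by (rule nonneg_infsum_le_0D) (use musum munn R_def in auto)
  qed
  have gnn: "\<And>i s. i < ?n \<Longrightarrow> 0 \<le> g i s"
  proof -
    fix i s assume i: "i < ?n"
    have "0 \<le> \<mu> s * fR i (?q s) / nR (?q s)"
      using fRnn[OF i, of "?q s"] nRnn[of "?q s"] munn[of s] by simp
    then show "0 \<le> g i s" by (simp add: g_def)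
  qed
  have gle: "\<And>i s. i < ?n \<Longrightarrow> g i s \<le> \<mu> s"
  proof -
    fix i s assume i: "i < ?n"
    show "g i s \<le> \<mu> s"
    proof (cases "nR (?q s) = 0")
      case True then show ?thesis by (simp add: g_def munn)
    next
      case False
      then have pos: "nR (?q s) > 0" using nRnn[of "?q s"] by simp
      have "fR i (?q s) / nR (?q s) \<le> 1" using fRle[OF i] pos by simp
      then have "\<mu> s * (fR i (?q s) / nR (?q s)) \<le> \<mu> s * 1"
        by (rule mult_left_mono) (rule munn)
      then show ?thesis using False by (simp add: g_def)
    qed
  qed
  have gsum: "\<And>s. (\<Sum>i<?n. g i s) = \<mu> s"
  proof -
    fix s
    show "(\<Sum>i<?n. g i s) = \<mu> s"
    proof (cases "nR (?q s) = 0")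
      case True then show ?thesis by (simp add: g_def mu0)
    next
      case False
      have "(\<Sum>i<?n. g i s) = (\<Sum>i<?n. \<mu> s * fR i (?q s) / nR (?q s))"
        using False by (simp add: g_def)
      also have "\<dots> = \<mu> s * (\<Sum>i<?n. fR i (?q s)) / nR (?q s)"
        by (simp add: sum_divide_distrib sum_distrib_left)
      also have "\<dots> = \<mu> s" using False fRsum by simp
      finally show ?thesis .
    qed
  qed
  have gsupp: "\<And>i s. i < ?n \<Longrightarrow> s \<in> supp (g i) \<Longrightarrow> sat s (fst (As!i))"
  proof -
    fix i s assume i: "i < ?n" and s: "s \<in> supp (g i)"
    have "g i s \<noteq> 0" using s unfolding supp_def by simp
    then have fR0: "fR i (?q s) \<noteq> 0" unfolding g_def by (cases "nR (?q s) = 0") (simp_all add: g_def)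
    then obtain t where t: "t \<in> R (?q s)" "f i t \<noteq> 0"
    proof -
      have "\<not> (\<forall>t\<in>R (?q s). f i t = 0)"
      proof
        assume a: "\<forall>t\<in>R (?q s). f i t = 0"
        have "fR i (?q s) = 0" unfolding fR_def by (rule infsum_0) (use a in blast)
        with fR0 show False by simp
      qed
      then show ?thesis using that by blast
    qed
    have "t \<in> supp (f i)" using t(2) by (simp add: supp_def)
    then have st: "sat t (fst (As!i))" using f(1) i by (meson)
    have "?q t = ?q s" using t(1) by (simp add: R_def)
    then have "?q t ! i = ?q s ! i" by simp
    then show "sat s (fst (As!i))" using st by (simp add: pat_nth[OF i])
  qed
  have gmass: "\<And>i. i < ?n \<Longrightarrow> mass (g i) = snd (As!i)"
  proof -
    fix i assume i: "i < ?n"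
    have gs: "g i summable_on UNIV"
      by (rule summable_on_comparison_test[OF musum]) (simp_all add: gle[OF i] gnn[OF i])
    have reg: "infsum (g i) (R b) = fR i b" for b
    proof (cases "nR b = 0")
      case True
      then have "fR i b = 0" using fRle[OF i, of b] fRnn[OF i, of b] by simp
      moreover have "infsum (g i) (R b) = 0"
        by (rule infsum_0) (simp add: g_def R_def True)
      ultimately show ?thesis by simp
    next
      case False
      have "infsum (g i) (R b) = infsum (\<lambda>s. (fR i b / nR b) * \<mu> s) (R b)"
        by (rule infsum_cong) (simp add: g_def R_def False)
      also have "\<dots> = (fR i b / nR b) * infsum \<mu> (R b)"
        by (rule infsum_cmult_right) (rule musum)
      also have "infsum \<mu> (R b) = nR b" using eq unfolding nR_def R_def by simp
      finally show ?thesis using False by simp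
    qed
    have "mass (g i) = (\<Sum>b\<in>range ?q. infsum (g i) (R b))"
      unfolding mass_def R_def using part[of "pat sat As" "g i", OF finite_range_pat gs] .
    also have "\<dots> = (\<Sum>b\<in>range ?q. fR i b)" by (rule sum.cong) (rule refl, rule reg)
    also have "\<dots> = mass (f i)"
      unfolding mass_def fR_def R_def using part[of "pat sat As" "f i", OF finite_range_pat fsum[OF i]] by (rule sym)
    also have "mass (f i) = snd (As!i)" using f(1) i by blast
    finally show "mass (g i) = snd (As!i)" .
  qed
  have "\<forall>i<?n. is_subdist (g i) \<and> mass (g i) = snd (As!i)
      \<and> (\<forall>s\<in>supp (g i). sat s (fst (As!i)))"
  proof (intro allI impI conjI ballI)
    fix i assume i: "i < ?n"
    show "is_subdist (g i)" by (rule subdist_le(1)[OF mu gnn[OF i] gle[OF i]])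
    show "mass (g i) = snd (As!i)" by (rule gmass[OF i])
    show "sat s (fst (As!i))" if "s \<in> supp (g i)" for s by (rule gsupp[OF i that])
  qed
  moreover have "\<mu> = (\<lambda>s. \<Sum>i<?n. g i s)" using gsum by simp
  ultimately show ?thesis unfolding dec_def by blast
qed

fun Cf :: "('sa \<Rightarrow> 'sa \<Rightarrow> 'sa) \<Rightarrow> ('sa \<Rightarrow> 'sa) \<Rightarrow> ('sa \<times> real) list \<Rightarrow> bool list \<Rightarrow> 'sa" where
  "Cf cj ng [] cs = ng (cj undefined (ng undefined))"
| "Cf cj ng (x # xs) [] = ng (cj undefined (ng undefined))"
| "Cf cj ng (x # xs) (c # cs) = cj (if c then fst x else ng (fst x)) (Cf cj ng xs cs)"

lemma Cf_sat:
  assumes cj: "\<And>s A B. sat s (cj A B) \<longleftrightarrow> sat s A \<and> sat s B"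
    and ng: "\<And>s A. sat s (ng A) \<longleftrightarrow> \<not> sat s A"
  shows "length cs = length xs \<Longrightarrow> sat s (Cf cj ng xs cs) \<longleftrightarrow> pat sat xs s = cs"
proof (induction xs arbitrary: cs)
  case Nil
  then show ?case by (simp add: cj ng pat_def)
next
  case (Cons x xs)
  then obtain c cs' where cs: "cs = c # cs'" "length cs' = length xs" by (cases cs) auto
  show ?case using Cons.IH[OF cs(2)] cs(1)
    by (cases x) (auto simp: cj ng pat_def)
qed

fun psi :: "('sa \<Rightarrow> 'sa \<Rightarrow> 'sa) \<Rightarrow> ('sa \<Rightarrow> 'sa) \<Rightarrow> ('sa \<times> real) list \<Rightarrow> (bool list \<Rightarrow> real)
    \<Rightarrow> bool list list \<Rightarrow> 'sa oassn" where
  "psi cj ng As m [] = OTopPlus"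
| "psi cj ng As m (b # bs) = OPlus (OAtom (Cf cj ng As b) (m b)) (psi cj ng As m bs)"

lemma psi_no_imp: "no_imp (psi cj ng As m bs)"
  by (induction bs) auto

lemma P1:
  fixes sat :: "'s::countable \<Rightarrow> 'sa \<Rightarrow> bool"
  assumes cj: "\<And>s A B. sat s (cj A B) \<longleftrightarrow> sat s A \<and> sat s B"
    and ng: "\<And>s A. sat s (ng A) \<longleftrightarrow> \<not> sat s A"
  shows "distinct bs \<Longrightarrow> is_subdist \<nu> \<Longrightarrow> (\<forall>s. pat sat As s \<notin> set bs \<longrightarrow> \<nu> s = 0)
    \<Longrightarrow> (\<forall>b\<in>set bs. infsum \<nu> {s. pat sat As s = b} = m b)
    \<Longrightarrow> osat sat \<nu> (psi cj ng As m bs)"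
proof (induction bs arbitrary: \<nu>)
  case Nil
  then show ?case by auto
next
  case (Cons b bs)
  let ?q = "pat sat As"
  define \<nu>1 where "\<nu>1 = (\<lambda>s. if ?q s = b then \<nu> s else 0)"
  define \<nu>2 where "\<nu>2 = (\<lambda>s. if ?q s = b then 0 else \<nu> s)"
  have nn: "\<And>s. 0 \<le> \<nu> s" using Cons.prems(2) by (simp add: is_subdist_def)
  have s1: "is_subdist \<nu>1"
    by (rule subdist_le(1)[OF Cons.prems(2)]) (simp_all add: \<nu>1_def nn)
  have s2: "is_subdist \<nu>2"
    by (rule subdist_le(1)[OF Cons.prems(2)]) (simp_all add: \<nu>2_def nn)
  have sum: "\<nu> = (\<lambda>s. \<nu>1 s + \<nu>2 s)" by (rule ext) (simp add: \<nu>1_def \<nu>2_def)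
  have m1: "mass \<nu>1 = m b"
  proof -
    have "mass \<nu>1 = infsum \<nu> {s. ?q s = b}" unfolding mass_def
      by (rule infsum_cong_neutral) (auto simp: \<nu>1_def)
    then show ?thesis using Cons.prems(4) by simp
  qed
  have a1: "osat sat \<nu>1 (OAtom (Cf cj ng As b) (m b))"
  proof -
    have "sat s (Cf cj ng As b)" if "s \<in> supp \<nu>1" for s
    proof -
      have "?q s = b" using that by (auto simp: supp_def \<nu>1_def split: if_splits)
      then show ?thesis using Cf_sat[where sat=sat and cj=cj and ng=ng, OF cj ng, of b As s] by (auto simp: pat_len)
    qed
    then show ?thesis using m1 by simp
  qed
  have "osat sat \<nu>2 (psi cj ng As m bs)"
  proof (rule Cons.IH)
    show "distinct bs" using Cons.prems(1) by simp
    show "is_subdist \<nu>2" by (rule s2)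
    show "\<forall>s. ?q s \<notin> set bs \<longrightarrow> \<nu>2 s = 0" using Cons.prems(3) by (auto simp: \<nu>2_def)
    show "\<forall>b'\<in>set bs. infsum \<nu>2 {s. ?q s = b'} = m b'"
    proof
      fix b' assume b': "b' \<in> set bs"
      then have "b' \<noteq> b" using Cons.prems(1) by auto
      then have "infsum \<nu>2 {s. ?q s = b'} = infsum \<nu> {s. ?q s = b'}"
        by (intro infsum_cong) (auto simp: \<nu>2_def)
      then show "infsum \<nu>2 {s. ?q s = b'} = m b'" using Cons.prems(4) b' by simp
    qed
  qed
  then show ?case using s1 s2 sum a1 by auto
qed

lemma P2:
  fixes sat :: "'s::countable \<Rightarrow> 'sa \<Rightarrow> bool"
  assumes cj: "\<And>s A B. sat s (cj A B) \<longleftrightarrow> sat s A \<and> sat s B"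
    and ng: "\<And>s A. sat s (ng A) \<longleftrightarrow> \<not> sat s A"
  shows "distinct bs \<Longrightarrow> (\<forall>b\<in>set bs. length b = length As) \<Longrightarrow> osat sat \<nu> (psi cj ng As m bs)
    \<Longrightarrow> (\<forall>s. pat sat As s \<notin> set bs \<longrightarrow> \<nu> s = 0)
      \<and> (\<forall>b\<in>set bs. infsum \<nu> {s. pat sat As s = b} = m b)"
proof (induction bs arbitrary: \<nu>)
  case Nil
  then show ?case by auto
next
  case (Cons b bs)
  let ?q = "pat sat As"
  obtain \<nu>1 \<nu>2 where h: "\<nu> = (\<lambda>s. \<nu>1 s + \<nu>2 s)" "osat sat \<nu>1 (OAtom (Cf cj ng As b) (m b))"
    "osat sat \<nu>2 (psi cj ng As m bs)" using Cons.prems(3) by auto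
  have ih: "(\<forall>s. ?q s \<notin> set bs \<longrightarrow> \<nu>2 s = 0) \<and> (\<forall>b\<in>set bs. infsum \<nu>2 {s. ?q s = b} = m b)"
    using Cons.IH[OF _ _ h(3)] Cons.prems by auto
  have lb: "length b = length As" using Cons.prems(2) by simp
  have z1: "\<nu>1 s = 0" if "?q s \<noteq> b" for s
  proof (rule ccontr)
    assume "\<nu>1 s \<noteq> 0"
    then have "s \<in> supp \<nu>1" by (simp add: supp_def)
    then have "sat s (Cf cj ng As b)" using h(2) by simp
    then show False using Cf_sat[where sat=sat and cj=cj and ng=ng, OF cj ng lb] that by simp
  qed
  have bn: "b \<notin> set bs" using Cons.prems(1) by simp
  have z2: "\<nu>2 s = 0" if "?q s = b" for s using ih bn that by auto
  have "\<forall>s. ?q s \<notin> set (b # bs) \<longrightarrow> \<nu> s = 0" using z1 ih h(1) by auto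
  moreover have "infsum \<nu> {s. ?q s = b} = m b"
  proof -
    have "infsum \<nu> {s. ?q s = b} = infsum \<nu>1 UNIV"
      by (rule infsum_cong_neutral) (auto simp: h(1) z1 z2)
    then show ?thesis using h(2) by (simp add: mass_def)
  qed
  moreover have "infsum \<nu> {s. ?q s = b'} = m b'" if b': "b' \<in> set bs" for b'
  proof -
    have "b' \<noteq> b" using b' bn by auto
    then have "infsum \<nu> {s. ?q s = b'} = infsum \<nu>2 {s. ?q s = b'}"
      by (intro infsum_cong) (auto simp: h(1) z1)
    then show ?thesis using ih b' by simp
  qed
  ultimately show ?case by auto
qed

theorem lemmaD10:
  fixes sat :: "'s::countable \<Rightarrow> 'sa \<Rightarrow> bool"
    and conj :: "'sa \<Rightarrow> 'sa \<Rightarrow> 'sa"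
    and neg :: "'sa \<Rightarrow> 'sa"
    and \<mu> :: "'s \<Rightarrow> real"
    and As :: "('sa \<times> real) list"
  assumes sat_conj: "\<And>s A B. sat s (conj A B) \<longleftrightarrow> sat s A \<and> sat s B"
    and sat_neg: "\<And>s A. sat s (neg A) \<longleftrightarrow> \<not> sat s A"
    and mu: "is_subdist \<mu>"
    and probs: "\<forall>(A, p) \<in> set As. 0 \<le> p \<and> p \<le> 1"
  shows "\<not> osat sat \<mu> (bigplus As) \<longleftrightarrow>
         (\<exists>\<psi>. no_imp \<psi> \<and> osat sat \<mu> \<psi> \<and> oentails sat \<psi> (ONot (bigplus As)))"
proof
  assume nsat: "\<not> osat sat \<mu> (bigplus As)"
  let ?q = "pat sat As"
  obtain bs where bs: "set bs = range ?q" "distinct bs"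
    using finite_distinct_list[OF finite_range_pat] by metis
  define m where "m b = infsum \<mu> {s. ?q s = b}" for b
  define \<psi> where "\<psi> = psi conj neg As m bs"
  have lens: "\<forall>b\<in>set bs. length b = length As" using bs(1) by (auto simp: pat_len)
  have "osat sat \<mu> \<psi>" unfolding \<psi>_def
    by (rule P1[where sat=sat and cj=conj and ng=neg, OF sat_conj sat_neg bs(2) mu])
       (use bs(1) in \<open>auto simp: m_def\<close>)
  moreover have "oentails sat \<psi> (ONot (bigplus As))"
    unfolding oentails_def
  proof (intro allI impI)
    fix \<nu> :: "'s \<Rightarrow> real"
    assume nu: "is_subdist \<nu>" and nps: "osat sat \<nu> \<psi>"
    have P: "\<forall>b\<in>set bs. infsum \<nu> {s. ?q s = b} = m b"
      using P2[where sat=sat and cj=conj and ng=neg, OF sat_conj sat_neg bs(2) lens] nps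
      unfolding \<psi>_def by blast
    have eq: "infsum \<nu> {s. ?q s = b} = infsum \<mu> {s. ?q s = b}" for b
    proof (cases "b \<in> range ?q")
      case True then have "b \<in> set bs" using bs(1) by simp
      then show ?thesis using P by (simp add: m_def)
    next
      case False
      then have "{s. ?q s = b} = {}" by auto
      then show ?thesis by simp
    qed
    show "osat sat \<nu> (ONot (bigplus As))"
    proof -
      have "\<not> osat sat \<nu> (bigplus As)"
      proof
        assume "osat sat \<nu> (bigplus As)"
        then have "dec sat As \<nu>" using L1[OF nu] by blast
        then have "dec sat As \<mu>" by (rule L2[OF nu mu _ eq])
        then have "osat sat \<mu> (bigplus As)" using L1[OF mu] by blast
        then show False using nsat by blast
      qed
      then show ?thesis by (simp add: ONot_def)
    qed
  qed
  moreover have "no_imp \<psi>" unfolding \<psi>_def by (rule psi_no_imp)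
  ultimately show "\<exists>\<psi>. no_imp \<psi> \<and> osat sat \<mu> \<psi> \<and> oentails sat \<psi> (ONot (bigplus As))" by blast
next
  assume "\<exists>\<psi>. no_imp \<psi> \<and> osat sat \<mu> \<psi> \<and> oentails sat \<psi> (ONot (bigplus As))"
  then obtain \<psi> where "osat sat \<mu> \<psi>" "oentails sat \<psi> (ONot (bigplus As))" by blast
  then have "osat sat \<mu> (ONot (bigplus As))" using mu by (auto simp: oentails_def)
  then show "\<not> osat sat \<mu> (bigplus As)" by (simp add: ONot_def)
qed

end
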